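(* Let $\sigma:\mathbb{R}\to\mathbb{R}$ be bounded and differentiable with bounded derivative. Let $d,r,L,K_n,n\in\mathbb{N}$ with $r\ge 2d$, $c_2>0$, data $(X_1,Y_1),\dots,(X_n,Y_n)\in\mathbb{R}^d\times\mathbb{R}$, and let $\alpha_n\ge 1$, $L_n>0$, $t_n\ge L_n$, $\gamma_n^*\ge 1$, $B_n\ge 1$. Let $\mathbf{w},\mathbf{v}$ be weight vectors such that $|w^{(L)}_{1,1,k}|\le\gamma_n^*$ for $k=1,\dots,K_n$, $|w^{(l)}_{k,i,j}|\le B_n$ for all $k,i,j$ and $l=1,\dots,L-1$, and \[ \|\mathbf{w}-\mathbf{v}\|_\infty^2\le \frac{2t_n}{L_n}\cdot\max\{F_n(\mathbf{v}),1\}. \] Then \[ \|(\nabla_{\mathbf{w}}F_n)(\mathbf{w})\|\le c_5\cdot K_n^{3/2}\cdot B_n^{2L}\cdot(\gamma_n^* )^2\cdot\alpha_n^2\cdot\sqrt{\frac{t_n}{L_n}\cdot\max\{F_n(\mathbf{v}),1\}}, \] where $c_5>0$ is a constant depending only on $\sigma,d,r,L,c_2$.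
   Context: For a weight vector $\mathbf{w}=(w^{(l)}_{k,i,j})$ define $f_{\mathbf{w}}(x)=\sum_{j=1}^{K_n} w^{(L)}_{1,1,j}f^{(L)}_{j,1}(x)$ ($x\in\mathbb{R}^d$), where for $k\in\{1,\dots,K_n\}$, $i\in\{1,\dots,r\}$: $f^{(l)}_{k,i}(x)=\sigma\big(\sum_{j=1}^r w^{(l-1)}_{k,i,j}f^{(l-1)}_{k,j}(x)+w^{(l-1)}_{k,i,0}\big)$ for $l=2,\dots,L$ and $f^{(1)}_{k,i}(x)=\sigma\big(\sum_{j=1}^d w^{(0)}_{k,i,j}x^{(j)}+w^{(0)}_{k,i,0}\big)$. The weight vector consists of all these weights (outer weights $w^{(L)}_{1,1,j}$, $j=1,\dots,K_n$; $w^{(l)}_{k,i,j}$, $1\le l\le L-1$, $j\in\{0,\dots,r\}$; $w^{(0)}_{k,i,j}$, $j\in\{0,\dots,d\}$). Define $F_n(\mathbf{w})=\frac1n\sum_{i=1}^n|f_{\mathbf{w}}(X_i)-Y_i|^2\,1_{[-\alpha_n,\alpha_n]^d}(X_i)+c_2\sum_{j=1}^{K_n}|w^{(L)}_{1,1,j}|^2$. $\|\cdot\|$ is the Euclidean norm and $\|\cdot\|_\infty$ the maximum norm of a weight vector. *)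

theory Defs
  imports "HOL-Analysis.Analysis"
begin

text \<open>A weight vector is a function on index quadruples (l,k,i,j) meaning w^{(l)}_{k,i,j}.
  Inputs x in R^d are functions nat => real with components x 1, ..., x d.\<close>

type_synonym weights = "nat \<times> nat \<times> nat \<times> nat \<Rightarrow> real"

definition weight_idx :: "nat \<Rightarrow> nat \<Rightarrow> nat \<Rightarrow> nat \<Rightarrow> (nat \<times> nat \<times> nat \<times> nat) set" where
  "weight_idx d r L K =
     {(L,1,1,j) | j. j \<in> {1..K}}
   \<union> {(l,k,i,j) | l k i j. l \<in> {1..L-1} \<and> k \<in> {1..K} \<and> i \<in> {1..r} \<and> j \<in> {0..r}}
   \<union> {(0,k,i,j) | k i j. k \<in> {1..K} \<and> i \<in> {1..r} \<and> j \<in> {0..d}}"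

text \<open>hidden_layer ... l k i x = f^{(l)}_{k,i}(x) for l >= 1 (value at l = 0 is junk).\<close>
fun hidden_layer :: "(real \<Rightarrow> real) \<Rightarrow> nat \<Rightarrow> nat \<Rightarrow> weights \<Rightarrow> nat \<Rightarrow> nat \<Rightarrow> nat \<Rightarrow> (nat \<Rightarrow> real) \<Rightarrow> real" where
  "hidden_layer \<sigma> d r w 0 k i x = 0"
| "hidden_layer \<sigma> d r w (Suc 0) k i x =
     \<sigma> ((\<Sum>j=1..d. w (0,k,i,j) * x j) + w (0,k,i,0))"
| "hidden_layer \<sigma> d r w (Suc (Suc l)) k i x =
     \<sigma> ((\<Sum>j=1..r. w (Suc l,k,i,j) * hidden_layer \<sigma> d r w (Suc l) k j x) + w (Suc l,k,i,0))"

definition net :: "(real \<Rightarrow> real) \<Rightarrow> nat \<Rightarrow> nat \<Rightarrow> nat \<Rightarrow> nat \<Rightarrow> weights \<Rightarrow> (nat \<Rightarrow> real) \<Rightarrow> real" where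
  "net \<sigma> d r L K w x = (\<Sum>j=1..K. w (L,1,1,j) * hidden_layer \<sigma> d r w L j 1 x)"

definition Fn :: "(real \<Rightarrow> real) \<Rightarrow> nat \<Rightarrow> nat \<Rightarrow> nat \<Rightarrow> nat \<Rightarrow> real \<Rightarrow> nat \<Rightarrow>
    (nat \<Rightarrow> nat \<Rightarrow> real) \<Rightarrow> (nat \<Rightarrow> real) \<Rightarrow> real \<Rightarrow> weights \<Rightarrow> real" where
  "Fn \<sigma> d r L K c2 n X Y \<alpha> w =
     (1 / real n) * (\<Sum>i=1..n. (net \<sigma> d r L K w (X i) - Y i)^2
                         * (if (\<forall>j\<in>{1..d}. \<bar>X i j\<bar> \<le> \<alpha>) then 1 else 0))
     + c2 * (\<Sum>j=1..K. (w (L,1,1,j))^2)"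

definition partial_w :: "(weights \<Rightarrow> real) \<Rightarrow> weights \<Rightarrow> nat \<times> nat \<times> nat \<times> nat \<Rightarrow> real" where
  "partial_w F w p = deriv (\<lambda>t. F (w(p := t))) (w p)"

definition grad_norm :: "nat \<Rightarrow> nat \<Rightarrow> nat \<Rightarrow> nat \<Rightarrow> (weights \<Rightarrow> real) \<Rightarrow> weights \<Rightarrow> real" where
  "grad_norm d r L K F w = sqrt (\<Sum>p\<in>weight_idx d r L K. (partial_w F w p)^2)"

definition max_norm :: "nat \<Rightarrow> nat \<Rightarrow> nat \<Rightarrow> nat \<Rightarrow> weights \<Rightarrow> real" where
  "max_norm d r L K w = Max ((\<lambda>p. \<bar>w p\<bar>) ` weight_idx d r L K)"

end

theory Submission imports Defs begin

lemma hl_bound: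
  assumes "\<forall>x. \<bar>\<sigma> x\<bar> \<le> Cs" "Cs \<ge> 0"
  shows "\<bar>hidden_layer \<sigma> d r w l k i x\<bar> \<le> Cs"
  using assms by (induction \<sigma> d r w l k i x rule: hidden_layer.induct) auto

lemma hl_local:
  assumes "\<forall>l'<l. \<forall>i j. w (l',k,i,j) = w' (l',k,i,j)"
  shows "hidden_layer \<sigma> d r w l k i x = hidden_layer \<sigma> d r w' l k i x"
  using assms by (induction \<sigma> d r w l k i x rule: hidden_layer.induct) auto

lemma upd_diff: "(\<lambda>s. (w(p:=s)) q) differentiable (at (t::real))"
  by (cases "q = p") simp_all

lemma hl_diff:
  assumes "\<forall>x. \<sigma> differentiable (at x)"
  shows "(\<lambda>s. hidden_layer \<sigma> d r (w(p:=s)) l k i x) differentiable (at t)"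
proof (induction l arbitrary: i rule: nat_less_induct)
  case (1 l)
  show ?case
  proof (cases l)
    case 0 then show ?thesis by simp
  next
    case (Suc m)
    show ?thesis
    proof (cases m)
      case 0
      have "(\<lambda>s. (\<Sum>j=1..d. (w(p:=s)) (0,k,i,j) * x j) + (w(p:=s)) (0,k,i,0)) differentiable (at t)"
        by (intro differentiable_add differentiable_sum ballI differentiable_mult upd_diff) simp_all
      from differentiable_chain_at[OF this assms[rule_format]]
      show ?thesis using Suc 0 by (simp add: o_def)
    next
      case (Suc m')
      have "(\<lambda>s. (\<Sum>j=1..r. (w(p:=s)) (Suc m',k,i,j) * hidden_layer \<sigma> d r (w(p:=s)) (Suc m') k j x) + (w(p:=s)) (Suc m',k,i,0)) differentiable (at t)"
      proof (intro differentiable_add differentiable_sum ballI differentiable_mult upd_diff)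
        fix j
        show "(\<lambda>s. hidden_layer \<sigma> d r (w(p:=s)) (Suc m') k j x) differentiable (at t)"
          using "1" \<open>l = Suc m\<close> Suc by blast
      qed simp_all
      from differentiable_chain_at[OF this assms[rule_format]]
      show ?thesis unfolding \<open>l = Suc m\<close> Suc hidden_layer.simps o_def .
    qed
  qed
qed

lemma Fn_diff:
  assumes "\<forall>x. \<sigma> differentiable (at x)"
  shows "(\<lambda>s. Fn \<sigma> d r L K c2 n X Y \<alpha> (w(p:=s))) differentiable (at t)"
  unfolding Fn_def net_def
  by (intro differentiable_add differentiable_sum ballI differentiable_mult upd_diff
      differentiable_power differentiable_diff hl_diff assms differentiable_const) simp_all

lemma deriv_bound:
  fixes g :: "real \<Rightarrow> real"
  assumes D: "(g has_real_derivative D) (at t)"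
    and b: "\<forall>s. \<bar>g s - g t\<bar> \<le> (A + Bc * \<bar>s - t\<bar>) * \<bar>s - t\<bar>"
  shows "\<bar>D\<bar> \<le> A"
proof -
  have "((\<lambda>h. (g (t + h) - g t) / h) \<longlongrightarrow> D) (at 0)"
    using D by (simp add: DERIV_def)
  then have l1: "((\<lambda>h. \<bar>(g (t + h) - g t) / h\<bar>) \<longlongrightarrow> \<bar>D\<bar>) (at 0)"
    by (rule tendsto_rabs)
  have l2: "((\<lambda>h. A + Bc * \<bar>h\<bar>) \<longlongrightarrow> A + Bc * \<bar>0\<bar>) (at (0::real))"
    by (intro tendsto_intros)
  have ev: "\<forall>\<^sub>F h in at 0. \<bar>(g (t + h) - g t) / h\<bar> \<le> A + Bc * \<bar>h\<bar>"
    unfolding eventually_at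
  proof (intro exI[of _ 1] conjI ballI impI)
    fix h :: real assume "h \<in> UNIV" "h \<noteq> 0 \<and> dist h 0 < 1"
    then have h: "h \<noteq> 0" by simp
    have "\<bar>g (t+h) - g t\<bar> \<le> (A + Bc * \<bar>h\<bar>) * \<bar>h\<bar>" using b[rule_format, of "t+h"] by simp
    then show "\<bar>(g (t + h) - g t) / h\<bar> \<le> A + Bc * \<bar>h\<bar>" using h
      by (simp add: abs_divide pos_divide_le_eq)
  qed simp
  show ?thesis using tendsto_le[OF _ l2 l1 ev] by simp
qed

lemma sigma_lip:
  fixes \<sigma> :: "real \<Rightarrow> real"
  assumes dif: "\<forall>x. \<sigma> differentiable (at x)" and db: "\<forall>x. \<bar>deriv \<sigma> x\<bar> \<le> Ls"
  shows "\<bar>\<sigma> a - \<sigma> b\<bar> \<le> Ls * \<bar>a - b\<bar>"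
proof -
  have D: "\<And>x. DERIV \<sigma> x :> deriv \<sigma> x" using DERIV_deriv_iff_real_differentiable[of \<sigma>] dif by blast
  have main: "\<bar>\<sigma> v - \<sigma> u\<bar> \<le> Ls * \<bar>v - u\<bar>" if uv: "u < v" for u v
  proof -
    obtain z where "\<sigma> v - \<sigma> u = (v - u) * deriv \<sigma> z" using MVT2[OF uv D] by blast
    then have "\<bar>\<sigma> v - \<sigma> u\<bar> = \<bar>v - u\<bar> * \<bar>deriv \<sigma> z\<bar>" by (simp add: abs_mult)
    also have "\<dots> \<le> \<bar>v - u\<bar> * Ls" using db by (intro mult_left_mono) auto
    finally show ?thesis by (simp add: mult.commute)
  qed
  show ?thesis
  proof (cases a b rule: linorder_cases)
    case less then show ?thesis using main[of a b] by (simp add: abs_minus_commute)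
  next
    case equal then show ?thesis by simp
  next
    case greater then show ?thesis using main[of b a] by simp
  qed
qed

fun Mc :: "real \<Rightarrow> real \<Rightarrow> nat \<Rightarrow> nat \<Rightarrow> nat \<Rightarrow> real" where
  "Mc Ls Cs d r 0 = Ls * (real d + 1)"
| "Mc Ls Cs d r (Suc m) = Ls * (real r * Cs + real r * Mc Ls Cs d r m + 1)"

lemma Mc_nonneg: "Ls \<ge> 0 \<Longrightarrow> Cs \<ge> 0 \<Longrightarrow> Mc Ls Cs d r m \<ge> 0"
  by (induction m) auto

lemma lip_step:
  fixes a a' h h' :: "nat \<Rightarrow> real"
  assumes "\<forall>j\<in>{1..r}. \<bar>a' j - a j\<bar> \<le> \<delta>" "\<forall>j\<in>{1..r}. \<bar>a j\<bar> \<le> B"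
    "\<forall>j\<in>{1..r}. \<bar>h' j\<bar> \<le> Cs" "\<forall>j\<in>{1..r}. \<bar>h' j - h j\<bar> \<le> M"
    "\<bar>c' - c\<bar> \<le> \<delta>" "\<delta> \<ge> 0" "B \<ge> 0"
  shows "\<bar>((\<Sum>j=1..r. a' j * h' j) + c') - ((\<Sum>j=1..r. a j * h j) + c)\<bar> \<le> real r * (\<delta> * Cs + B * M) + \<delta>"
proof -
  define f where "f j = (a' j - a j) * h' j + a j * (h' j - h j)" for j
  have t: "\<And>j. f j = a' j * h' j - a j * h j" unfolding f_def by (simp add: algebra_simps)
  have eq: "((\<Sum>j=1..r. a' j * h' j) + c') - ((\<Sum>j=1..r. a j * h j) + c) = (\<Sum>j=1..r. f j) + (c' - c)"
    unfolding t by (simp add: sum_subtractf)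
  have s1: "\<bar>(\<Sum>j=1..r. f j)\<bar> \<le> (\<Sum>j=1..r. \<bar>f j\<bar>)" by (rule sum_abs)
  have "(\<Sum>j=1..r. \<bar>f j\<bar>) \<le> real (card {1..r}) * (\<delta> * Cs + B * M)"
  proof (rule sum_bounded_above)
    fix j assume j: "j \<in> {1..r}"
    have "\<bar>f j\<bar> \<le> \<bar>a' j - a j\<bar> * \<bar>h' j\<bar> + \<bar>a j\<bar> * \<bar>h' j - h j\<bar>"
      unfolding f_def by (rule order_trans[OF abs_triangle_ineq], simp add: abs_mult)
    also have "\<dots> \<le> \<delta> * Cs + B * M"
      using assms j by (intro add_mono mult_mono) auto
    finally show "\<bar>f j\<bar> \<le> \<delta> * Cs + B * M" .
  qed
  then have "(\<Sum>j=1..r. \<bar>f j\<bar>) \<le> real r * (\<delta> * Cs + B * M)" by simp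
  then have "\<bar>(\<Sum>j=1..r. f j)\<bar> \<le> real r * (\<delta> * Cs + B * M)" using s1 by linarith
  then show ?thesis unfolding eq using abs_triangle_ineq[of "\<Sum>j=1..r. f j" "c' - c"] assms(5) by linarith
qed

lemma hl_lip:
  assumes sl: "\<forall>a b. \<bar>\<sigma> a - \<sigma> b\<bar> \<le> Ls * \<bar>a - b\<bar>" and Cs: "\<forall>x. \<bar>\<sigma> x\<bar> \<le> Cs"
    and Ls0: "Ls \<ge> 0" and Cs0: "Cs \<ge> 0" and B1: "B \<ge> 1" and a1: "\<alpha> \<ge> 1"
    and x: "\<forall>j\<in>{1..d}. \<bar>x j\<bar> \<le> \<alpha>"
    and wb: "\<forall>l' i j. 1 \<le> l' \<longrightarrow> l' < L \<longrightarrow> i \<in> {1..r} \<longrightarrow> j \<in> {1..r} \<longrightarrow> \<bar>w (l',k,i,j)\<bar> \<le> B"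
    and dl: "\<forall>q. \<bar>w' q - w q\<bar> \<le> \<delta>"
  shows "Suc m \<le> L \<Longrightarrow> i \<in> {1..r} \<Longrightarrow>
    \<bar>hidden_layer \<sigma> d r w' (Suc m) k i x - hidden_layer \<sigma> d r w (Suc m) k i x\<bar>
      \<le> Mc Ls Cs d r m * B^m * \<alpha> * \<delta>"
proof (induction m arbitrary: i)
  case 0
  have d0: "\<delta> \<ge> 0" using dl[rule_format, of undefined] abs_ge_zero[of "w' undefined - w undefined"] by linarith
  let ?a' = "(\<Sum>j=1..d. w' (0,k,i,j) * x j) + w' (0,k,i,0)"
  let ?a = "(\<Sum>j=1..d. w (0,k,i,j) * x j) + w (0,k,i,0)"
  have "?a' - ?a = (\<Sum>j=1..d. (w' (0,k,i,j) - w (0,k,i,j)) * x j) + (w' (0,k,i,0) - w (0,k,i,0))"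
    by (simp add: sum_subtractf algebra_simps)
  also have "\<bar>\<dots>\<bar> \<le> (\<Sum>j=1..d. \<bar>(w' (0,k,i,j) - w (0,k,i,j)) * x j\<bar>) + \<bar>w' (0,k,i,0) - w (0,k,i,0)\<bar>"
    by (rule order_trans[OF abs_triangle_ineq add_mono[OF sum_abs order_refl]])
  also have "\<dots> \<le> real d * (\<delta> * \<alpha>) + \<delta>"
  proof (intro add_mono)
    have "(\<Sum>j=1..d. \<bar>(w' (0,k,i,j) - w (0,k,i,j)) * x j\<bar>) \<le> real (card {1..d}) * (\<delta> * \<alpha>)"
      by (rule sum_bounded_above) (use dl x d0 in \<open>auto simp: abs_mult intro!: mult_mono\<close>)
    then show "(\<Sum>j=1..d. \<bar>(w' (0,k,i,j) - w (0,k,i,j)) * x j\<bar>) \<le> real d * (\<delta> * \<alpha>)" by simp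
  qed (rule dl[rule_format])
  also have "\<dots> \<le> (real d + 1) * \<alpha> * \<delta>"
  proof -
    have "\<delta> \<le> \<alpha> * \<delta>" using a1 d0 by (simp add: mult_le_cancel_right1)
    moreover have "(real d + 1) * \<alpha> * \<delta> = real d * (\<delta> * \<alpha>) + \<alpha> * \<delta>" by (simp add: algebra_simps)
    ultimately show ?thesis by linarith
  qed
  finally have "\<bar>?a' - ?a\<bar> \<le> (real d + 1) * \<alpha> * \<delta>" .
  then have "\<bar>\<sigma> ?a' - \<sigma> ?a\<bar> \<le> Ls * ((real d + 1) * \<alpha> * \<delta>)"
    by (rule order_trans[OF sl[rule_format] mult_left_mono[OF _ Ls0]])
  then show ?case by (simp add: algebra_simps)
next
  case (Suc m)
  have d0: "\<delta> \<ge> 0" using dl[rule_format, of undefined] abs_ge_zero[of "w' undefined - w undefined"] by linarith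
  let ?h' = "\<lambda>j. hidden_layer \<sigma> d r w' (Suc m) k j x"
  let ?h = "\<lambda>j. hidden_layer \<sigma> d r w (Suc m) k j x"
  let ?M = "Mc Ls Cs d r m * B^m * \<alpha> * \<delta>"
  let ?a' = "(\<Sum>j=1..r. w' (Suc m,k,i,j) * ?h' j) + w' (Suc m,k,i,0)"
  let ?a = "(\<Sum>j=1..r. w (Suc m,k,i,j) * ?h j) + w (Suc m,k,i,0)"
  have IH: "\<bar>?h' j - ?h j\<bar> \<le> ?M" if "j \<in> {1..r}" for j
    using Suc.IH[OF _ that] Suc.prems by simp
  have "\<bar>?a' - ?a\<bar> \<le> real r * (\<delta> * Cs + B * ?M) + \<delta>"
  proof (rule lip_step)
    show "\<forall>j\<in>{1..r}. \<bar>w (Suc m,k,i,j)\<bar> \<le> B" using wb Suc.prems(1,2) by simp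
    show "\<forall>j\<in>{1..r}. \<bar>?h' j\<bar> \<le> Cs" using hl_bound[OF Cs Cs0] by blast
    show "\<forall>j\<in>{1..r}. \<bar>?h' j - ?h j\<bar> \<le> ?M" using IH by blast
  qed (use dl d0 B1 in auto)
  also have "\<dots> \<le> (real r * Cs + real r * Mc Ls Cs d r m + 1) * B^(Suc m) * \<alpha> * \<delta>"
  proof -
    have "1 * 1 \<le> B^(Suc m) * \<alpha>" by (rule mult_mono) (use B1 a1 one_le_power[of B "Suc m"] in auto)
    then have P: "B^(Suc m) * \<alpha> \<ge> 1" by simp
    define X where "X = B^(Suc m) * \<alpha>"
    have P': "X \<ge> 1" using P X_def by simp
    have f1: "real r * (\<delta> * Cs) \<le> real r * (Cs * X * \<delta>)"
    proof (rule mult_left_mono)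
      have "\<delta> * Cs * 1 \<le> \<delta> * Cs * X" using P' d0 Cs0 by (intro mult_left_mono) simp_all
      then show "\<delta> * Cs \<le> Cs * X * \<delta>" by (simp add: ac_simps)
    qed simp
    have f2: "\<delta> \<le> X * \<delta>" using P' d0 by (simp add: mult_le_cancel_right1)
    have f3: "real r * (\<delta> * Cs + B * ?M) = real r * (\<delta> * Cs) + real r * (Mc Ls Cs d r m * X * \<delta>)"
      by (simp add: X_def algebra_simps)
    have f4: "(real r * Cs + real r * Mc Ls Cs d r m + 1) * B^(Suc m) * \<alpha> * \<delta>
       = real r * (Cs * X * \<delta>) + real r * (Mc Ls Cs d r m * X * \<delta>) + X * \<delta>"
      by (simp add: X_def algebra_simps)
    show ?thesis unfolding f3 f4 using f1 f2 by linarith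
  qed
  finally have "\<bar>?a' - ?a\<bar> \<le> (real r * Cs + real r * Mc Ls Cs d r m + 1) * B^(Suc m) * \<alpha> * \<delta>" .
  then have "\<bar>\<sigma> ?a' - \<sigma> ?a\<bar> \<le> Ls * ((real r * Cs + real r * Mc Ls Cs d r m + 1) * B^(Suc m) * \<alpha> * \<delta>)"
    by (rule order_trans[OF sl[rule_format] mult_left_mono[OF _ Ls0]])
  moreover have "Mc Ls Cs d r (Suc m) * B ^ Suc m * \<alpha> * \<delta> = Ls * ((real r * Cs + real r * Mc Ls Cs d r m + 1) * B^(Suc m) * \<alpha> * \<delta>)"
    by (simp only: Mc.simps mult.assoc)
  ultimately show ?case unfolding hidden_layer.simps by linarith
qed

lemma sum_single:
  fixes f :: "nat \<Rightarrow> real"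
  assumes "finite A" "\<forall>j\<in>A. j \<noteq> jz \<longrightarrow> f j = 0" "\<forall>j\<in>A. \<bar>f j\<bar> \<le> M" "0 \<le> M"
  shows "\<bar>sum f A\<bar> \<le> M"
proof -
  have "sum f A = sum f (A \<inter> {jz})"
    by (rule sum.mono_neutral_right) (use assms in auto)
  then show ?thesis using assms by (cases "jz \<in> A") auto
qed

lemma sum_prod_diff:
  fixes a a' h h' :: "nat \<Rightarrow> real"
  shows "(\<Sum>j\<in>A. a' j * h' j) - (\<Sum>j\<in>A. a j * h j) = (\<Sum>j\<in>A. (a' j - a j) * h' j) + (\<Sum>j\<in>A. a j * (h' j - h j))"
proof -
  have t: "\<And>j. a' j * h' j - a j * h j = (a' j - a j) * h' j + a j * (h' j - h j)" by (simp add: algebra_simps)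
  have "(\<Sum>j\<in>A. a' j * h' j) - (\<Sum>j\<in>A. a j * h j) = (\<Sum>j\<in>A. a' j * h' j - a j * h j)"
    by (rule sum_subtractf[symmetric])
  also have "\<dots> = (\<Sum>j\<in>A. (a' j - a j) * h' j + a j * (h' j - h j))" by (simp only: t)
  also have "\<dots> = (\<Sum>j\<in>A. (a' j - a j) * h' j) + (\<Sum>j\<in>A. a j * (h' j - h j))" by (rule sum.distrib)
  finally show ?thesis .
qed

lemma net_diff:
  assumes sl: "\<forall>a b. \<bar>\<sigma> a - \<sigma> b\<bar> \<le> Ls * \<bar>a - b\<bar>" and Cs: "\<forall>x. \<bar>\<sigma> x\<bar> \<le> Cs"
    and Ls0: "Ls \<ge> 0" and Cs0: "Cs \<ge> 0" and B1: "B \<ge> 1" and a1: "\<alpha> \<ge> 1" and L1: "L \<ge> 1" and r1: "r \<ge> 1"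
    and x: "\<forall>j\<in>{1..d}. \<bar>x j\<bar> \<le> \<alpha>"
    and wb: "\<forall>k\<in>{1..K}. \<forall>l' i j. 1 \<le> l' \<longrightarrow> l' < L \<longrightarrow> i \<in> {1..r} \<longrightarrow> j \<in> {1..r} \<longrightarrow> \<bar>w (l',k,i,j)\<bar> \<le> B"
    and gb: "\<forall>j\<in>{1..K}. \<bar>w (L,1,1,j)\<bar> \<le> \<gamma>" and g0: "\<gamma> \<ge> 0"
  shows "\<bar>net \<sigma> d r L K (w(p:=s)) x - net \<sigma> d r L K w x\<bar>
     \<le> (Cs + \<gamma> * (Mc Ls Cs d r (L-1) * B^(L-1) * \<alpha>)) * \<bar>s - w p\<bar>"
proof -
  obtain pl pk pi pj where p: "p = (pl,pk,pi,pj)" by (cases p)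
  define w' where "w' = w(p:=s)"
  define \<delta> where "\<delta> = \<bar>s - w p\<bar>"
  have d0: "\<delta> \<ge> 0" unfolding \<delta>_def by simp
  have dl: "\<forall>q. \<bar>w' q - w q\<bar> \<le> \<delta>" unfolding w'_def \<delta>_def by simp
  let ?h' = "\<lambda>j. hidden_layer \<sigma> d r w' L j 1 x"
  let ?h = "\<lambda>j. hidden_layer \<sigma> d r w L j 1 x"
  have eq: "net \<sigma> d r L K w' x - net \<sigma> d r L K w x
      = (\<Sum>j\<in>{1..K}. (w' (L,1,1,j) - w (L,1,1,j)) * ?h' j) + (\<Sum>j\<in>{1..K}. w (L,1,1,j) * (?h' j - ?h j))"
    unfolding net_def by (rule sum_prod_diff)
  have S1: "\<bar>\<Sum>j\<in>{1..K}. (w' (L,1,1,j) - w (L,1,1,j)) * ?h' j\<bar> \<le> \<delta> * Cs"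
  proof (rule sum_single[where jz=pj])
    show "\<forall>j\<in>{1..K}. j \<noteq> pj \<longrightarrow> (w' (L,1,1,j) - w (L,1,1,j)) * ?h' j = 0"
      unfolding w'_def p by auto
    show "\<forall>j\<in>{1..K}. \<bar>(w' (L,1,1,j) - w (L,1,1,j)) * ?h' j\<bar> \<le> \<delta> * Cs"
      using dl hl_bound[OF Cs Cs0] d0 by (auto simp: abs_mult intro!: mult_mono)
  qed (use d0 Cs0 in auto)
  have S2: "\<bar>\<Sum>j\<in>{1..K}. w (L,1,1,j) * (?h' j - ?h j)\<bar> \<le> \<gamma> * (Mc Ls Cs d r (L-1) * B^(L-1) * \<alpha> * \<delta>)"
  proof (rule sum_single[where jz=pk])
    show "\<forall>j\<in>{1..K}. j \<noteq> pk \<longrightarrow> w (L,1,1,j) * (?h' j - ?h j) = 0"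
    proof (intro ballI impI)
      fix j assume "j \<noteq> pk"
      then have "?h j = ?h' j"
        by (intro hl_local) (auto simp: w'_def p)
      then show "w (L,1,1,j) * (?h' j - ?h j) = 0" by simp
    qed
    show "\<forall>j\<in>{1..K}. \<bar>w (L,1,1,j) * (?h' j - ?h j)\<bar> \<le> \<gamma> * (Mc Ls Cs d r (L-1) * B^(L-1) * \<alpha> * \<delta>)"
    proof
      fix j assume j: "j \<in> {1..K}"
      have "\<bar>?h' j - ?h j\<bar> \<le> Mc Ls Cs d r (L-1) * B^(L-1) * \<alpha> * \<delta>"
      proof -
        have wbj: "\<forall>l' i jj. 1 \<le> l' \<longrightarrow> l' < L \<longrightarrow> i \<in> {1..r} \<longrightarrow> jj \<in> {1..r} \<longrightarrow> \<bar>w (l',j,i,jj)\<bar> \<le> B"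
          using wb j by blast
        have "Suc (L-1) \<le> L" "(1::nat) \<in> {1..r}" using L1 r1 by auto
        from hl_lip[OF sl Cs Ls0 Cs0 B1 a1 x wbj dl this]
        show ?thesis using L1 by simp
      qed
      then show "\<bar>w (L,1,1,j) * (?h' j - ?h j)\<bar> \<le> \<gamma> * (Mc Ls Cs d r (L-1) * B^(L-1) * \<alpha> * \<delta>)"
        unfolding abs_mult using gb j by (intro mult_mono) auto
    qed
    show "0 \<le> \<gamma> * (Mc Ls Cs d r (L-1) * B^(L-1) * \<alpha> * \<delta>)"
      using g0 Mc_nonneg[OF Ls0 Cs0] B1 a1 d0 by simp
  qed simp
  have "\<bar>net \<sigma> d r L K w' x - net \<sigma> d r L K w x\<bar> \<le> \<delta> * Cs + \<gamma> * (Mc Ls Cs d r (L-1) * B^(L-1) * \<alpha> * \<delta>)"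
    unfolding eq using S1 S2 abs_triangle_ineq[of "\<Sum>j\<in>{1..K}. (w' (L,1,1,j) - w (L,1,1,j)) * ?h' j" "\<Sum>j\<in>{1..K}. w (L,1,1,j) * (?h' j - ?h j)"]
    by linarith
  moreover have "\<delta> * Cs + \<gamma> * (Mc Ls Cs d r (L-1) * B^(L-1) * \<alpha> * \<delta>) = (Cs + \<gamma> * (Mc Ls Cs d r (L-1) * B^(L-1) * \<alpha>)) * \<delta>"
    by (simp add: algebra_simps)
  ultimately show ?thesis unfolding w'_def \<delta>_def by simp
qed

lemma sq_diff:
  fixes a a' y D :: real
  assumes "\<bar>a' - a\<bar> \<le> D"
  shows "\<bar>(a' - y)^2 - (a - y)^2\<bar> \<le> D * (D + 2 * \<bar>a - y\<bar>)"
proof -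
  have "(a' - y)^2 - (a - y)^2 = (a' - a) * ((a' - a) + 2 * (a - y))" by (simp add: power2_eq_square algebra_simps)
  then have "\<bar>(a' - y)^2 - (a - y)^2\<bar> = \<bar>a' - a\<bar> * \<bar>(a' - a) + 2 * (a - y)\<bar>" by (simp add: abs_mult)
  also have "\<dots> \<le> \<bar>a' - a\<bar> * (\<bar>a' - a\<bar> + 2 * \<bar>a - y\<bar>)"
  proof (rule mult_left_mono)
    have "\<bar>(a' - a) + 2 * (a - y)\<bar> \<le> \<bar>a' - a\<bar> + \<bar>2 * (a - y)\<bar>" by (rule abs_triangle_ineq)
    moreover have "\<bar>2 * (a - y)\<bar> = 2 * \<bar>a - y\<bar>" by (simp only: abs_mult abs_numeral)
    ultimately show "\<bar>(a' - a) + 2 * (a - y)\<bar> \<le> \<bar>a' - a\<bar> + 2 * \<bar>a - y\<bar>" by linarith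
  qed simp
  also have "\<dots> \<le> D * (D + 2 * \<bar>a - y\<bar>)" using assms by (intro mult_mono add_mono) auto
  finally show ?thesis .
qed

lemma Fn_diff_bound:
  assumes sl: "\<forall>a b. \<bar>\<sigma> a - \<sigma> b\<bar> \<le> Ls * \<bar>a - b\<bar>" and Cs: "\<forall>x. \<bar>\<sigma> x\<bar> \<le> Cs"
    and Ls0: "Ls \<ge> 0" and Cs0: "Cs \<ge> 0" and B1: "B \<ge> 1" and a1: "\<alpha> \<ge> 1" and L1: "L \<ge> 1" and r1: "r \<ge> 1"
    and wb: "\<forall>k\<in>{1..K}. \<forall>l' i j. 1 \<le> l' \<longrightarrow> l' < L \<longrightarrow> i \<in> {1..r} \<longrightarrow> j \<in> {1..r} \<longrightarrow> \<bar>w (l',k,i,j)\<bar> \<le> B"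
    and gb: "\<forall>j\<in>{1..K}. \<bar>w (L,1,1,j)\<bar> \<le> \<gamma>" and g0: "\<gamma> \<ge> 0" and c20: "c2 \<ge> 0"
    and Ndef: "N = Cs + \<gamma> * (Mc Ls Cs d r (L-1) * B^(L-1) * \<alpha>)"
    and Idef: "I = (\<lambda>i. if (\<forall>j\<in>{1..d}. \<bar>X i j\<bar> \<le> \<alpha>) then 1 else (0::real))"
  shows "\<bar>Fn \<sigma> d r L K c2 n X Y \<alpha> (w(p:=s)) - Fn \<sigma> d r L K c2 n X Y \<alpha> w\<bar>
     \<le> ((2 * N * ((1 / real n) * (\<Sum>i=1..n. I i * \<bar>net \<sigma> d r L K w (X i) - Y i\<bar>)) + 2 * c2 * \<gamma>)
         + (N^2 * ((1 / real n) * (\<Sum>i=1..n. I i)) + c2) * \<bar>s - w p\<bar>) * \<bar>s - w p\<bar>"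
proof -
  define w' where "w' = w(p:=s)"
  define \<delta> where "\<delta> = \<bar>s - w p\<bar>"
  have d0: "\<delta> \<ge> 0" unfolding \<delta>_def by simp
  have N0: "N \<ge> 0" unfolding Ndef using Cs0 g0 Mc_nonneg[OF Ls0 Cs0] B1 a1 by simp
  define P where "P (v::weights) = (\<Sum>i=1..n. (net \<sigma> d r L K v (X i) - Y i)^2 * I i)" for v
  define Q where "Q (v::weights) = (\<Sum>j=1..K. (v (L,1,1,j))^2)" for v
  have FPQ: "Fn \<sigma> d r L K c2 n X Y \<alpha> v = (1 / real n) * P v + c2 * Q v" for v
    unfolding Fn_def P_def Q_def Idef by simp
  define e where "e i = \<bar>net \<sigma> d r L K w (X i) - Y i\<bar>" for i
  define T where "T i = (net \<sigma> d r L K w' (X i) - Y i)^2 * I i - (net \<sigma> d r L K w (X i) - Y i)^2 * I i" for i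
  have PT: "P w' - P w = (\<Sum>i=1..n. T i)" unfolding P_def T_def by (rule sum_subtractf[symmetric])
  have Tb: "\<bar>T i\<bar> \<le> (N * \<delta>)^2 * I i + 2 * N * \<delta> * (I i * e i)" for i
  proof (cases "\<forall>j\<in>{1..d}. \<bar>X i j\<bar> \<le> \<alpha>")
    case True
    have "\<bar>net \<sigma> d r L K w' (X i) - net \<sigma> d r L K w (X i)\<bar> \<le> N * \<delta>"
      unfolding w'_def \<delta>_def Ndef by (rule net_diff[OF sl Cs Ls0 Cs0 B1 a1 L1 r1 True wb gb g0])
    from sq_diff[OF this, of "Y i"] have "\<bar>T i\<bar> \<le> N * \<delta> * (N * \<delta> + 2 * e i)"
      using True unfolding T_def Idef e_def by simp
    then show ?thesis using True unfolding Idef by (simp add: power2_eq_square algebra_simps)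
  next
    case False
    then show ?thesis unfolding T_def Idef by auto
  qed
  have "\<bar>\<Sum>i=1..n. T i\<bar> \<le> (\<Sum>i=1..n. (N * \<delta>)^2 * I i + 2 * N * \<delta> * (I i * e i))"
    by (rule order_trans[OF sum_abs sum_mono]) (rule Tb)
  also have "\<dots> = (N * \<delta>)^2 * (\<Sum>i=1..n. I i) + 2 * N * \<delta> * (\<Sum>i=1..n. I i * e i)"
    by (simp add: sum.distrib sum_distrib_left)
  finally have PB: "\<bar>P w' - P w\<bar> \<le> (N * \<delta>)^2 * (\<Sum>i=1..n. I i) + 2 * N * \<delta> * (\<Sum>i=1..n. I i * e i)"
    unfolding PT .
  have QB: "\<bar>Q w' - Q w\<bar> \<le> \<delta> * (\<delta> + 2 * \<gamma>)"
  proof -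
    obtain pl pk pi pj where p: "p = (pl,pk,pi,pj)" by (cases p)
    have "Q w' - Q w = (\<Sum>j=1..K. (w' (L,1,1,j))^2 - (w (L,1,1,j))^2)"
      unfolding Q_def by (rule sum_subtractf[symmetric])
    also have "\<bar>\<dots>\<bar> \<le> \<delta> * (\<delta> + 2 * \<gamma>)"
    proof (rule sum_single[where jz=pj])
      show "\<forall>j\<in>{1..K}. j \<noteq> pj \<longrightarrow> (w' (L,1,1,j))^2 - (w (L,1,1,j))^2 = 0"
        unfolding w'_def p by auto
      show "\<forall>j\<in>{1..K}. \<bar>(w' (L,1,1,j))^2 - (w (L,1,1,j))^2\<bar> \<le> \<delta> * (\<delta> + 2 * \<gamma>)"
      proof
        fix j assume j: "j \<in> {1..K}"
        have "\<bar>w' (L,1,1,j) - w (L,1,1,j)\<bar> \<le> \<delta>" unfolding w'_def \<delta>_def by simp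
        from sq_diff[OF this, of 0]
        have "\<bar>(w' (L,1,1,j))^2 - (w (L,1,1,j))^2\<bar> \<le> \<delta> * (\<delta> + 2 * \<bar>w (L,1,1,j)\<bar>)" by simp
        also have "\<dots> \<le> \<delta> * (\<delta> + 2 * \<gamma>)" using gb j d0 by (intro mult_left_mono) auto
        finally show "\<bar>(w' (L,1,1,j))^2 - (w (L,1,1,j))^2\<bar> \<le> \<delta> * (\<delta> + 2 * \<gamma>)" .
      qed
    qed (use d0 g0 in auto)
    finally show ?thesis .
  qed
  have "Fn \<sigma> d r L K c2 n X Y \<alpha> w' - Fn \<sigma> d r L K c2 n X Y \<alpha> w = (1 / real n) * (P w' - P w) + c2 * (Q w' - Q w)"
    unfolding FPQ by (simp add: algebra_simps)
  then have "\<bar>Fn \<sigma> d r L K c2 n X Y \<alpha> w' - Fn \<sigma> d r L K c2 n X Y \<alpha> w\<bar> \<le> (1 / real n) * \<bar>P w' - P w\<bar> + c2 * \<bar>Q w' - Q w\<bar>"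
    using c20 by (simp add: abs_mult order_trans[OF abs_triangle_ineq])
  also have "\<dots> \<le> (1 / real n) * ((N * \<delta>)^2 * (\<Sum>i=1..n. I i) + 2 * N * \<delta> * (\<Sum>i=1..n. I i * e i)) + c2 * (\<delta> * (\<delta> + 2 * \<gamma>))"
    using PB QB c20 by (intro add_mono mult_left_mono) auto
  also have "\<dots> = ((2 * N * ((1 / real n) * (\<Sum>i=1..n. I i * e i)) + 2 * c2 * \<gamma>)
         + (N^2 * ((1 / real n) * (\<Sum>i=1..n. I i)) + c2) * \<delta>) * \<delta>"
    by (simp add: power2_eq_square algebra_simps)
  finally show ?thesis unfolding w'_def \<delta>_def e_def .
qed

lemma W_card:
  "finite (weight_idx d r L K) \<and> card (weight_idx d r L K) \<le> K * (1 + (L-1)*r*(r+1) + r*(d+1))"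
proof -
  define L' where "L' = L - 1"
  let ?U = "(\<lambda>j. (L,1::nat,1::nat,j)) ` {1..K} \<union> ({1..L'} \<times> {1..K} \<times> {1..r} \<times> {0..r}) \<union> ({0} \<times> {1..K} \<times> {1..r} \<times> {0..d})"
  have sub: "weight_idx d r L K \<subseteq> ?U" unfolding weight_idx_def L'_def by auto
  have fin: "finite ?U" by simp
  have "card ?U \<le> card ((\<lambda>j. (L,1::nat,1::nat,j)) ` {1..K}) + card ({1..L'} \<times> {1..K} \<times> {1..r} \<times> {0..r}) + card ({0::nat} \<times> {1..K} \<times> {1..r} \<times> {0..d})"
    using card_Un_le[of "(\<lambda>j. (L,1::nat,1::nat,j)) ` {1..K} \<union> ({1..L'} \<times> {1..K} \<times> {1..r} \<times> {0..r})" "{0::nat} \<times> {1..K} \<times> {1..r} \<times> {0..d}"]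
      card_Un_le[of "(\<lambda>j. (L,1::nat,1::nat,j)) ` {1..K}" "{1..L'} \<times> {1..K} \<times> {1..r} \<times> {0..r}"] by linarith
  also have "\<dots> \<le> K + L'*K*r*(r+1) + K*r*(d+1)"
  proof -
    have c1: "card ((\<lambda>j. (L,1::nat,1::nat,j)) ` {1..K}) \<le> K"
      using card_image_le[of "{1..K}" "\<lambda>j. (L,1::nat,1::nat,j)"] by simp
    have c2: "card ({1..L'} \<times> {1..K} \<times> {1..r} \<times> {0..r}) = L'*K*r*(r+1)"
      by (simp add: card_cartesian_product algebra_simps)
    have c3: "card ({0::nat} \<times> {1..K} \<times> {1..r} \<times> {0..d}) = K*r*(d+1)"
      by (simp add: card_cartesian_product algebra_simps)
    show ?thesis using c1 c2 c3 by linarith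
  qed
  also have "\<dots> = K * (1 + L'*r*(r+1) + r*(d+1))" by (simp add: algebra_simps)
  finally have cU: "card ?U \<le> K * (1 + L'*r*(r+1) + r*(d+1))" .
  have "card (weight_idx d r L K) \<le> card ?U" by (rule card_mono[OF fin sub])
  then have "card (weight_idx d r L K) \<le> K * (1 + L'*r*(r+1) + r*(d+1))" using cU by (rule order_trans)
  then show ?thesis using finite_subset[OF sub fin] unfolding L'_def by blast
qed

lemma net_wv:
  assumes Cs: "\<forall>x. \<bar>\<sigma> x\<bar> \<le> Cs" and Cs0: "Cs \<ge> 0"
    and gb: "\<forall>j\<in>{1..K}. \<bar>w (L,1,1,j)\<bar> \<le> \<gamma>" and db: "\<forall>j\<in>{1..K}. \<bar>w (L,1,1,j) - v (L,1,1,j)\<bar> \<le> \<Delta>"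
  shows "\<bar>net \<sigma> d r L K w x - net \<sigma> d r L K v x\<bar> \<le> real K * (Cs * (2 * \<gamma> + \<Delta>))"
proof -
  have eq: "net \<sigma> d r L K w x - net \<sigma> d r L K v x = (\<Sum>j=1..K. w (L,1,1,j) * hidden_layer \<sigma> d r w L j 1 x - v (L,1,1,j) * hidden_layer \<sigma> d r v L j 1 x)"
    unfolding net_def by (rule sum_subtractf[symmetric])
  have "\<bar>\<Sum>j=1..K. w (L,1,1,j) * hidden_layer \<sigma> d r w L j 1 x - v (L,1,1,j) * hidden_layer \<sigma> d r v L j 1 x\<bar> \<le> (\<Sum>j=1..K. \<bar>w (L,1,1,j) * hidden_layer \<sigma> d r w L j 1 x - v (L,1,1,j) * hidden_layer \<sigma> d r v L j 1 x\<bar>)"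
    by (rule sum_abs)
  also have "\<dots> \<le> real (card {1..K}) * (Cs * (2 * \<gamma> + \<Delta>))"
  proof (rule sum_bounded_above)
    fix j assume j: "j \<in> {1..K}"
    have h1: "\<bar>hidden_layer \<sigma> d r w L j 1 x\<bar> \<le> Cs" "\<bar>hidden_layer \<sigma> d r v L j 1 x\<bar> \<le> Cs"
      using hl_bound[OF Cs Cs0] by auto
    have g: "\<bar>w (L,1,1,j)\<bar> \<le> \<gamma>" using gb j by auto
    have vv: "\<bar>v (L,1,1,j)\<bar> \<le> \<gamma> + \<Delta>"
      using g db[rule_format, OF j] abs_triangle_ineq3[of "w (L,1,1,j)" "v (L,1,1,j)"] by linarith
    have "\<bar>w (L,1,1,j) * hidden_layer \<sigma> d r w L j 1 x - v (L,1,1,j) * hidden_layer \<sigma> d r v L j 1 x\<bar>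
       \<le> \<bar>w (L,1,1,j)\<bar> * \<bar>hidden_layer \<sigma> d r w L j 1 x\<bar> + \<bar>v (L,1,1,j)\<bar> * \<bar>hidden_layer \<sigma> d r v L j 1 x\<bar>"
      by (rule order_trans[OF abs_triangle_ineq4], simp add: abs_mult)
    also have "\<dots> \<le> \<gamma> * Cs + (\<gamma> + \<Delta>) * Cs"
      by (rule add_mono[OF mult_mono[OF g h1(1)] mult_mono[OF vv h1(2)]]) (use g vv in \<open>simp_all\<close>)
    finally show "\<bar>w (L,1,1,j) * hidden_layer \<sigma> d r w L j 1 x - v (L,1,1,j) * hidden_layer \<sigma> d r v L j 1 x\<bar> \<le> Cs * (2 * \<gamma> + \<Delta>)"
      by (simp add: algebra_simps)
  qed
  finally show ?thesis unfolding eq by simp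
qed

lemma resid_sum:
  fixes z I :: "nat \<Rightarrow> real"
  assumes S0: "S > 0" and I01: "\<forall>i. I i = 0 \<or> I i = 1" and n1: "n \<ge> 1"
    and F: "(1 / real n) * (\<Sum>i=1..n. z i ^ 2 * I i) \<le> S^2"
  shows "(\<Sum>i=1..n. I i * \<bar>z i\<bar>) \<le> real n * S"
proof -
  have pt: "2 * S * (I i * \<bar>z i\<bar>) \<le> S^2 * I i + z i ^ 2 * I i" for i
  proof -
    have "0 \<le> (\<bar>z i\<bar> - S)^2" by simp
    then have "2 * S * \<bar>z i\<bar> \<le> S^2 + z i ^ 2" by (simp add: power2_eq_square algebra_simps)
    then show ?thesis using I01[rule_format, of i] by auto
  qed
  have "2 * S * (\<Sum>i=1..n. I i * \<bar>z i\<bar>) = (\<Sum>i=1..n. 2 * S * (I i * \<bar>z i\<bar>))" by (simp add: sum_distrib_left)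
  also have "\<dots> \<le> (\<Sum>i=1..n. S^2 * I i + z i ^ 2 * I i)" by (rule sum_mono) (rule pt)
  also have "\<dots> = S^2 * (\<Sum>i=1..n. I i) + (\<Sum>i=1..n. z i ^ 2 * I i)" by (simp add: sum.distrib sum_distrib_left)
  also have "\<dots> \<le> S^2 * real n + real n * S^2"
  proof (rule add_mono)
    have "(\<Sum>i=1..n. I i) \<le> real (card {1..n}) * 1" by (rule sum_bounded_above) (metis I01 order_refl zero_le_one)
    then show "S^2 * (\<Sum>i=1..n. I i) \<le> S^2 * real n" by (intro mult_left_mono) auto
    have "real n > 0" using n1 by simp
    then show "(\<Sum>i=1..n. z i ^ 2 * I i) \<le> real n * S^2" using F by (simp add: field_simps)
  qed
  also have "S^2 * real n + real n * S^2 = 2 * S * (real n * S)" by (simp add: power2_eq_square)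
  finally have "2 * S * (\<Sum>i=1..n. I i * \<bar>z i\<bar>) \<le> 2 * S * (real n * S)" .
  then show ?thesis using S0 by simp
qed

theorem lemma2:
  fixes \<sigma> :: "real \<Rightarrow> real" and d r L :: nat and c2 :: real
  assumes "bounded (range \<sigma>)"
    and "\<forall>x. \<sigma> differentiable (at x)"
    and "bounded (range (deriv \<sigma>))"
    and "d \<ge> 1" and "L \<ge> 1" and "r \<ge> 2 * d" and "c2 > 0"
  shows "\<exists>c5>0. \<forall>(K::nat) (n::nat) (X::nat \<Rightarrow> nat \<Rightarrow> real) (Y::nat \<Rightarrow> real)
            (\<alpha>::real) (Ln::real) (tn::real) (\<gamma>::real) (B::real) (w::weights) (v::weights).
     K \<ge> 1 \<and> n \<ge> 1 \<and> \<alpha> \<ge> 1 \<and> Ln > 0 \<and> tn \<ge> Ln \<and> \<gamma> \<ge> 1 \<and> B \<ge> 1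
     \<and> (\<forall>k\<in>{1..K}. \<bar>w (L,1,1,k)\<bar> \<le> \<gamma>)
     \<and> (\<forall>p\<in>weight_idx d r L K. fst p \<in> {1..L-1} \<longrightarrow> \<bar>w p\<bar> \<le> B)
     \<and> (max_norm d r L K (\<lambda>p. w p - v p))^2
          \<le> 2 * tn / Ln * max (Fn \<sigma> d r L K c2 n X Y \<alpha> v) 1
     \<longrightarrow> grad_norm d r L K (Fn \<sigma> d r L K c2 n X Y \<alpha>) w
          \<le> c5 * real K powr (3/2) * B ^ (2 * L) * \<gamma>^2 * \<alpha>^2
             * sqrt (tn / Ln * max (Fn \<sigma> d r L K c2 n X Y \<alpha> v) 1)"
proof -
  obtain Cs1 where Cs1: "\<forall>x. \<bar>\<sigma> x\<bar> \<le> Cs1" using assms(1) unfolding bounded_iff by auto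
  define Cs where "Cs = max Cs1 0"
  have Cs: "\<forall>x. \<bar>\<sigma> x\<bar> \<le> Cs" using Cs1 unfolding Cs_def by (meson max.coboundedI1)
  have Cs0: "Cs \<ge> 0" unfolding Cs_def by simp
  obtain Ls1 where Ls1: "\<forall>x. \<bar>deriv \<sigma> x\<bar> \<le> Ls1" using assms(3) unfolding bounded_iff by auto
  define Ls where "Ls = max Ls1 0"
  have Lsb: "\<forall>x. \<bar>deriv \<sigma> x\<bar> \<le> Ls" using Ls1 unfolding Ls_def by (meson max.coboundedI1)
  have Ls0: "Ls \<ge> 0" unfolding Ls_def by simp
  have sl: "\<forall>a b. \<bar>\<sigma> a - \<sigma> b\<bar> \<le> Ls * \<bar>a - b\<bar>" using sigma_lip[OF assms(2) Lsb] by blast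
  have r1: "r \<ge> 1" using assms(4,6) by linarith
  have L1: "L \<ge> 1" using assms(5) .
  define Mcst where "Mcst = Mc Ls Cs d r (L-1)"
  have Mc0: "Mcst \<ge> 0" unfolding Mcst_def using Mc_nonneg[OF Ls0 Cs0] .
  define N0 where "N0 = Cs + Mcst"
  define c6 where "c6 = 2 * N0 * (4 * Cs + 1) + 2 * c2"
  define cw where "cw = real (1 + (L-1)*r*(r+1) + r*(d+1))"
  define c5 where "c5 = sqrt cw * c6 + 1"
  have N00: "N0 \<ge> 0" unfolding N0_def using Cs0 Mc0 by simp
  have c60: "c6 \<ge> 0" unfolding c6_def using N00 Cs0 assms(7) by simp
  have cw0: "cw \<ge> 0" unfolding cw_def by simp
  have "sqrt cw * c6 \<ge> 0" using c60 cw0 by simp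
  then have c50: "c5 > 0" unfolding c5_def by linarith
  show ?thesis
  proof (intro exI[of _ c5] conjI allI impI)
    show "c5 > 0" by (rule c50)
    fix K n :: nat and X :: "nat \<Rightarrow> nat \<Rightarrow> real" and Y :: "nat \<Rightarrow> real"
      and \<alpha> Ln tn \<gamma> B :: real and w v :: weights
    assume H: "K \<ge> 1 \<and> n \<ge> 1 \<and> \<alpha> \<ge> 1 \<and> Ln > 0 \<and> tn \<ge> Ln \<and> \<gamma> \<ge> 1 \<and> B \<ge> 1
     \<and> (\<forall>k\<in>{1..K}. \<bar>w (L,1,1,k)\<bar> \<le> \<gamma>)
     \<and> (\<forall>p\<in>weight_idx d r L K. fst p \<in> {1..L-1} \<longrightarrow> \<bar>w p\<bar> \<le> B)
     \<and> (max_norm d r L K (\<lambda>p. w p - v p))^2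
          \<le> 2 * tn / Ln * max (Fn \<sigma> d r L K c2 n X Y \<alpha> v) 1"
    then have K1: "K \<ge> 1" and n1: "n \<ge> 1" and a1: "\<alpha> \<ge> 1" and Ln0: "Ln > 0" and tL: "tn \<ge> Ln"
      and g1: "\<gamma> \<ge> 1" and B1: "B \<ge> 1" and gb: "\<forall>j\<in>{1..K}. \<bar>w (L,1,1,j)\<bar> \<le> \<gamma>"
      and wbH: "\<forall>p\<in>weight_idx d r L K. fst p \<in> {1..L-1} \<longrightarrow> \<bar>w p\<bar> \<le> B"
      and mnH: "(max_norm d r L K (\<lambda>p. w p - v p))^2 \<le> 2 * tn / Ln * max (Fn \<sigma> d r L K c2 n X Y \<alpha> v) 1"
      by auto
    let ?F = "Fn \<sigma> d r L K c2 n X Y \<alpha>"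
    define Fv where "Fv = ?F v"
    define R where "R = tn / Ln * max Fv 1"
    define S where "S = sqrt R"
    have tL1: "tn / Ln \<ge> 1" using Ln0 tL by simp
    have R1: "R \<ge> 1"
    proof -
      have "1 * 1 \<le> tn / Ln * max Fv 1" using tL1 by (intro mult_mono) auto
      then show ?thesis unfolding R_def by simp
    qed
    have S1: "S \<ge> 1" unfolding S_def using R1 by simp
    have SS: "S^2 = R" unfolding S_def using R1 by simp
    have FvS: "Fv \<le> S^2"
    proof -
      have "1 * max Fv 1 \<le> tn / Ln * max Fv 1" using tL1 by (intro mult_right_mono) auto
      then show ?thesis unfolding SS R_def by simp
    qed
    have g0: "\<gamma> \<ge> 0" using g1 by simp
    have Wfin: "finite (weight_idx d r L K)" using W_card by blast
    define \<Delta> where "\<Delta> = max_norm d r L K (\<lambda>p. w p - v p)"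
    have \<Delta>b: "\<bar>w p - v p\<bar> \<le> \<Delta>" if "p \<in> weight_idx d r L K" for p
      unfolding \<Delta>_def max_norm_def using Wfin that by (intro Max_ge) auto
    have \<Delta>S: "\<Delta> \<le> 2 * S"
    proof (rule power2_le_imp_le)
      have "\<Delta>^2 \<le> 2 * R" using mnH unfolding \<Delta>_def R_def Fv_def by simp
      also have "\<dots> \<le> (2 * S)^2" unfolding power_mult_distrib SS using R1 by simp
      finally show "\<Delta>^2 \<le> (2 * S)^2" .
    qed (use S1 in simp)
    have wb: "\<forall>k\<in>{1..K}. \<forall>l' i j. 1 \<le> l' \<longrightarrow> l' < L \<longrightarrow> i \<in> {1..r} \<longrightarrow> j \<in> {1..r} \<longrightarrow> \<bar>w (l',k,i,j)\<bar> \<le> B"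
    proof (intro ballI allI impI)
      fix k l' i j assume "k \<in> {1..K}" "1 \<le> l'" "l' < L" "i \<in> {1..r}" "j \<in> {1..r}"
      then have "(l',k,i,j) \<in> weight_idx d r L K" unfolding weight_idx_def by auto
      then show "\<bar>w (l',k,i,j)\<bar> \<le> B" using wbH \<open>1 \<le> l'\<close> \<open>l' < L\<close> by auto
    qed
    define I where "I = (\<lambda>i. if (\<forall>j\<in>{1..d}. \<bar>X i j\<bar> \<le> \<alpha>) then 1 else (0::real))"
    have I01: "\<forall>i. I i = 0 \<or> I i = 1" unfolding I_def by simp
    define N where "N = Cs + \<gamma> * (Mc Ls Cs d r (L-1) * B^(L-1) * \<alpha>)"
    define E where "E = (1 / real n) * (\<Sum>i=1..n. I i * \<bar>net \<sigma> d r L K w (X i) - Y i\<bar>)"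
    define A where "A = 2 * N * E + 2 * c2 * \<gamma>"
    have partial: "\<bar>partial_w ?F w p\<bar> \<le> A" for p
    proof -
      define g where "g s = ?F (w(p:=s))" for s
      have "g differentiable (at (w p))" unfolding g_def by (rule Fn_diff[OF assms(2)])
      then have D: "(g has_real_derivative deriv g (w p)) (at (w p))"
        using DERIV_deriv_iff_real_differentiable by blast
      have "\<forall>s. \<bar>g s - g (w p)\<bar> \<le> (A + (N^2 * ((1 / real n) * (\<Sum>i=1..n. I i)) + c2) * \<bar>s - w p\<bar>) * \<bar>s - w p\<bar>"
      proof
        fix s
        have "g (w p) = ?F w" unfolding g_def by simp
        then show "\<bar>g s - g (w p)\<bar> \<le> (A + (N^2 * ((1 / real n) * (\<Sum>i=1..n. I i)) + c2) * \<bar>s - w p\<bar>) * \<bar>s - w p\<bar>"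
          unfolding g_def A_def E_def
          using Fn_diff_bound[OF sl Cs Ls0 Cs0 B1 a1 L1 r1 wb gb g0 _ N_def I_def, of c2 n Y p s] assms(7)
          by simp
      qed
      from deriv_bound[OF D this] show ?thesis unfolding partial_w_def g_def .
    qed
    have netwv: "\<bar>net \<sigma> d r L K w x - net \<sigma> d r L K v x\<bar> \<le> 4 * real K * Cs * \<gamma> * S" for x
    proof -
      have db: "\<forall>j\<in>{1..K}. \<bar>w (L,1,1,j) - v (L,1,1,j)\<bar> \<le> \<Delta>"
      proof
        fix j assume "j \<in> {1..K}"
        then have "(L,1,1,j) \<in> weight_idx d r L K" unfolding weight_idx_def by auto
        then show "\<bar>w (L,1,1,j) - v (L,1,1,j)\<bar> \<le> \<Delta>" by (rule \<Delta>b)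
      qed
      have "\<bar>net \<sigma> d r L K w x - net \<sigma> d r L K v x\<bar> \<le> real K * (Cs * (2 * \<gamma> + \<Delta>))"
        by (rule net_wv[OF Cs Cs0 gb db])
      also have "\<dots> \<le> real K * (Cs * (4 * \<gamma> * S))"
      proof -
        have "\<gamma> \<le> \<gamma> * S" using S1 g0 by (simp add: mult_le_cancel_left1)
        moreover have "S \<le> \<gamma> * S" using S1 g1 by (simp add: mult_le_cancel_right1)
        ultimately have "2 * \<gamma> + \<Delta> \<le> 4 * \<gamma> * S" using \<Delta>S by linarith
        then show ?thesis using Cs0 by (intro mult_left_mono) auto
      qed
      finally show ?thesis by (simp add: algebra_simps)
    qed
    have sum1: "(\<Sum>i=1..n. I i * \<bar>net \<sigma> d r L K v (X i) - Y i\<bar>) \<le> real n * S"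
    proof (rule resid_sum[OF _ I01 n1])
      show "S > 0" using S1 by simp
      have "(1 / real n) * (\<Sum>i=1..n. (net \<sigma> d r L K v (X i) - Y i)^2 * I i) \<le> Fv"
        unfolding Fv_def Fn_def I_def using assms(7)
        by (simp add: sum_nonneg)
      then show "(1 / real n) * (\<Sum>i=1..n. (net \<sigma> d r L K v (X i) - Y i)^2 * I i) \<le> S^2" using FvS by linarith
    qed
    have sum2: "(\<Sum>i=1..n. I i * \<bar>net \<sigma> d r L K w (X i) - net \<sigma> d r L K v (X i)\<bar>) \<le> real (card {1..n}) * (4 * real K * Cs * \<gamma> * S)"
    proof (rule sum_bounded_above)
      fix i
      have "I i * \<bar>net \<sigma> d r L K w (X i) - net \<sigma> d r L K v (X i)\<bar> \<le> \<bar>net \<sigma> d r L K w (X i) - net \<sigma> d r L K v (X i)\<bar>"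
        using I01[rule_format, of i] by auto
      then show "I i * \<bar>net \<sigma> d r L K w (X i) - net \<sigma> d r L K v (X i)\<bar> \<le> 4 * real K * Cs * \<gamma> * S"
        using netwv[of "X i"] by linarith
    qed
    have sum3: "(\<Sum>i=1..n. I i * \<bar>net \<sigma> d r L K w (X i) - Y i\<bar>)
       \<le> (\<Sum>i=1..n. I i * \<bar>net \<sigma> d r L K w (X i) - net \<sigma> d r L K v (X i)\<bar>) + (\<Sum>i=1..n. I i * \<bar>net \<sigma> d r L K v (X i) - Y i\<bar>)"
    proof -
      have "I i * \<bar>net \<sigma> d r L K w (X i) - Y i\<bar> \<le> I i * \<bar>net \<sigma> d r L K w (X i) - net \<sigma> d r L K v (X i)\<bar> + I i * \<bar>net \<sigma> d r L K v (X i) - Y i\<bar>" for i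
      proof -
        have "\<bar>net \<sigma> d r L K w (X i) - Y i\<bar> \<le> \<bar>net \<sigma> d r L K w (X i) - net \<sigma> d r L K v (X i)\<bar> + \<bar>net \<sigma> d r L K v (X i) - Y i\<bar>"
          using abs_triangle_ineq[of "net \<sigma> d r L K w (X i) - net \<sigma> d r L K v (X i)" "net \<sigma> d r L K v (X i) - Y i"] by simp
        then show ?thesis using I01[rule_format, of i] by auto
      qed
      then have "(\<Sum>i=1..n. I i * \<bar>net \<sigma> d r L K w (X i) - Y i\<bar>) \<le> (\<Sum>i=1..n. I i * \<bar>net \<sigma> d r L K w (X i) - net \<sigma> d r L K v (X i)\<bar> + I i * \<bar>net \<sigma> d r L K v (X i) - Y i\<bar>)"
        by (intro sum_mono)
      then show ?thesis by (simp add: sum.distrib)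
    qed
    have Eb: "E \<le> (4 * Cs + 1) * real K * \<gamma> * S"
    proof -
      have n0: "real n > 0" using n1 by simp
      have "(\<Sum>i=1..n. I i * \<bar>net \<sigma> d r L K w (X i) - Y i\<bar>) \<le> real n * (4 * real K * Cs * \<gamma> * S) + real n * S"
        using sum1 sum2 sum3 by simp
      then have "E \<le> 4 * real K * Cs * \<gamma> * S + S" unfolding E_def using n0 by (simp add: field_simps)
      moreover have "S \<le> real K * \<gamma> * S"
      proof -
        have "1 * 1 \<le> real K * \<gamma>" using K1 g1 by (intro mult_mono) auto
        then show ?thesis using S1 by (simp add: mult_le_cancel_right1)
      qed
      ultimately show ?thesis by (simp add: algebra_simps)
    qed
    define Z where "Z = \<gamma> * B^(L-1) * \<alpha>"
    have Z1: "Z \<ge> 1"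
    proof -
      have "1 \<le> B^(L-1)" using B1 by simp
      then have "1 * 1 \<le> \<gamma> * B^(L-1)" using g1 by (intro mult_mono) auto
      then have "1 * 1 \<le> \<gamma> * B^(L-1) * \<alpha>" using a1 by (intro mult_mono) auto
      then show ?thesis unfolding Z_def by simp
    qed
    have NZ: "N \<le> N0 * Z"
    proof -
      have "Cs \<le> Cs * Z" using Z1 Cs0 by (simp add: mult_le_cancel_left1)
      moreover have "\<gamma> * (Mc Ls Cs d r (L-1) * B^(L-1) * \<alpha>) = Mcst * Z" unfolding Mcst_def Z_def by (simp add: ac_simps)
      ultimately show ?thesis unfolding N_def N0_def by (simp add: algebra_simps)
    qed
    have N0': "N \<ge> 0" unfolding N_def using Cs0 g0 Mc0 B1 a1 Mcst_def by simp
    have E0: "E \<ge> 0" unfolding E_def I_def by (simp add: sum_nonneg)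
    define Q where "Q = Z * real K * \<gamma> * S"
    have Q1: "Q \<ge> 1"
    proof -
      have "1 * 1 \<le> Z * real K" using Z1 K1 by (intro mult_mono) auto
      then have "1 * 1 \<le> Z * real K * \<gamma>" using g1 by (intro mult_mono) auto
      then have "1 * 1 \<le> Z * real K * \<gamma> * S" using S1 by (intro mult_mono) auto
      then show ?thesis unfolding Q_def by simp
    qed
    have AQ: "A \<le> c6 * Q"
    proof -
      have "2 * N * E \<le> 2 * (N0 * Z) * ((4 * Cs + 1) * real K * \<gamma> * S)"
        using NZ Eb N0' E0 by (intro mult_mono) auto
      also have "\<dots> = 2 * N0 * (4 * Cs + 1) * Q" unfolding Q_def by (simp add: ac_simps)
      finally have t1: "2 * N * E \<le> 2 * N0 * (4 * Cs + 1) * Q" .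
      have "2 * c2 * \<gamma> \<le> 2 * c2 * \<gamma> * (Z * real K * S)"
      proof -
        have "1 * 1 \<le> Z * real K" using Z1 K1 by (intro mult_mono) auto
        then have "1 * 1 \<le> Z * real K * S" using S1 by (intro mult_mono) auto
        then have "1 \<le> Z * real K * S" by simp
        moreover have "0 \<le> 2 * c2 * \<gamma>" using assms(7) g0 by simp
        ultimately have "(2 * c2 * \<gamma>) * 1 \<le> (2 * c2 * \<gamma>) * (Z * real K * S)" by (rule mult_left_mono)
        then show ?thesis by simp
      qed
      also have "\<dots> = 2 * c2 * Q" unfolding Q_def by (simp add: ac_simps)
      finally have t2: "2 * c2 * \<gamma> \<le> 2 * c2 * Q" .
      have "c6 * Q = 2 * N0 * (4 * Cs + 1) * Q + 2 * c2 * Q" unfolding c6_def by (simp add: algebra_simps)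
      then show ?thesis unfolding A_def using t1 t2 by linarith
    qed
    have A0: "A \<ge> 0" using partial[of undefined] by linarith
    have cardW: "real (card (weight_idx d r L K)) \<le> real K * cw"
    proof -
      have "card (weight_idx d r L K) \<le> K * (1 + (L-1)*r*(r+1) + r*(d+1))" using W_card by blast
      then have "real (card (weight_idx d r L K)) \<le> real (K * (1 + (L-1)*r*(r+1) + r*(d+1)))" by linarith
      then show ?thesis unfolding cw_def by (simp only: of_nat_mult)
    qed
    have "(\<Sum>p\<in>weight_idx d r L K. (partial_w ?F w p)^2) \<le> real (card (weight_idx d r L K)) * A^2"
    proof (rule sum_bounded_above)
      fix p
      have "\<bar>partial_w ?F w p\<bar>^2 \<le> A^2" using partial[of p] by (intro power_mono) auto
      then show "(partial_w ?F w p)^2 \<le> A^2" by simp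
    qed
    also have "\<dots> \<le> (real K * cw) * A^2" using cardW by (intro mult_right_mono) auto
    finally have sq: "(\<Sum>p\<in>weight_idx d r L K. (partial_w ?F w p)^2) \<le> (real K * cw) * A^2" .
    have "grad_norm d r L K ?F w \<le> sqrt ((real K * cw) * A^2)"
      unfolding grad_norm_def using sq by (rule real_sqrt_le_mono)
    also have "\<dots> = sqrt (real K) * sqrt cw * A" using A0 by (simp add: real_sqrt_mult)
    also have "\<dots> \<le> sqrt (real K) * sqrt cw * (c6 * Q)" using AQ cw0 by (intro mult_left_mono) auto
    also have "\<dots> = (sqrt cw * c6) * B^(L-1) * \<alpha> * (real K * sqrt (real K) * \<gamma>^2 * S)"
      unfolding Q_def Z_def by (simp add: power2_eq_square ac_simps)
    also have "\<dots> \<le> c5 * B^(2*L) * \<alpha>^2 * (real K * sqrt (real K) * \<gamma>^2 * S)"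
    proof (rule mult_right_mono)
      have "B^(L-1) \<le> B^(2*L)" using B1 by (intro power_increasing) auto
      moreover have "\<alpha> \<le> \<alpha>^2" using a1 by (simp add: power2_eq_square)
      moreover have "sqrt cw * c6 \<le> c5" unfolding c5_def by simp
      ultimately show "(sqrt cw * c6) * B^(L-1) * \<alpha> \<le> c5 * B^(2*L) * \<alpha>^2"
        using c60 cw0 a1 B1 c50 by (intro mult_mono) auto
    qed (use S1 in simp)
    also have "\<dots> = c5 * real K powr (3/2) * B ^ (2 * L) * \<gamma>^2 * \<alpha>^2 * S"
    proof -
      have "real K powr (3/2) = real K * sqrt (real K)"
      proof -
        have "real K powr (3/2) = real K powr (1 + 1/2)" by simp
        also have "\<dots> = real K powr 1 * real K powr (1/2)" by (rule powr_add)
        also have "\<dots> = real K * sqrt (real K)" using K1 by (simp add: powr_half_sqrt)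
        finally show ?thesis .
      qed
      then show ?thesis by (simp add: ac_simps)
    qed
    finally show "grad_norm d r L K ?F w \<le> c5 * real K powr (3/2) * B ^ (2 * L) * \<gamma>^2 * \<alpha>^2
             * sqrt (tn / Ln * max (?F v) 1)" unfolding S_def R_def Fv_def .
  qed
qed

end
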